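(* Let $k\geq 2$ and let $(\Sigma_k,\sigma)$ be the full one-sided shift on $k$ symbols. Then the set $Rec(\Sigma_k)\setminus BR(\Sigma_k)$ is dense in $\Sigma_k$ and contains an uncountable DC1-scrambled subset.
   Context: $\Sigma_k=\{0,1,\dots,k-1\}^{\mathbb{N}}$ with metric $d(x,y)=\sum_{n\ge1}\delta(x_n,y_n)/2^n$ (where $\delta(a,b)=0$ if $a=b$ and $1$ otherwise) and shift $\sigma(x_1x_2x_3\dots)=(x_2x_3\dots)$. For a point $x$ and open set $U$, $N(x,U)=\{n\ge1: \sigma^n(x)\in U\}$; $B_\varepsilon(x)$ is the open $\varepsilon$-ball. For $S\subseteq\mathbb{N}$, the Banach upper density is $B^*(S)=\limsup_{|I|\to\infty}|S\cap I|/|I|$ over finite intervals of consecutive integers $I$. A point $x$ is recurrent ($x\in Rec$) if $N(x,B_\varepsilon(x))\neq\emptyset$ for every $\varepsilon>0$, and Banach recurrent ($x\in BR$) if $B^*(N(x,B_\varepsilon(x)))>0$ for every $\varepsilon>0$. For $x,y$ and $t\in\mathbb{R}$, $\Phi^{(n)}_{xy}(t)=\frac1n|\{0\le i<n: d(\sigma^i x,\sigma^i y)<t\}|$, $\Phi_{xy}=\liminf_n\Phi^{(n)}_{xy}$, $\Phi^*_{xy}=\limsup_n\Phi^{(n)}_{xy}$. A pair $(x,y)$ is DC1 if $\Phi_{xy}(s)=0$ for some $s>0$ and $\Phi^*_{xy}(t)=1$ for all $t>0$; a set with at least two points is DC1-scrambled if every pair of distinct points in it is DC1. *)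

theory Defs
  imports "HOL-Analysis.Analysis"
begin

text \<open>Points of the shift space are sequences indexed from 0: the paper's
  x_1 x_2 x_3 ... is represented by x 0, x 1, x 2, ...\<close>

definition shift_space :: "nat \<Rightarrow> (nat \<Rightarrow> nat) set" where
  "shift_space k = {x. \<forall>n. x n < k}"

definition sdist :: "(nat \<Rightarrow> nat) \<Rightarrow> (nat \<Rightarrow> nat) \<Rightarrow> real" where
  "sdist x y = (\<Sum>n. (if x n = y n then 0 else 1) / 2 ^ (Suc n))"

definition shift :: "(nat \<Rightarrow> nat) \<Rightarrow> (nat \<Rightarrow> nat)" where
  "shift x = (\<lambda>n. x (Suc n))"

definition sball :: "nat \<Rightarrow> (nat \<Rightarrow> nat) \<Rightarrow> real \<Rightarrow> (nat \<Rightarrow> nat) set" where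
  "sball k x e = {y \<in> shift_space k. sdist x y < e}"

definition hitting_times :: "(nat \<Rightarrow> nat) \<Rightarrow> (nat \<Rightarrow> nat) set \<Rightarrow> nat set" where
  "hitting_times x U = {n. n \<ge> 1 \<and> (shift ^^ n) x \<in> U}"

definition banach_upper_density :: "nat set \<Rightarrow> real" where
  "banach_upper_density S =
     (INF M::nat. SUP p \<in> {(a::nat, m::nat). m \<ge> M \<and> m > 0}.
        real (card (S \<inter> {fst p..<fst p + snd p})) / real (snd p))"

definition Rec :: "nat \<Rightarrow> (nat \<Rightarrow> nat) set" where
  "Rec k = {x \<in> shift_space k. \<forall>e>0. hitting_times x (sball k x e) \<noteq> {}}"

definition BR :: "nat \<Rightarrow> (nat \<Rightarrow> nat) set" where
  "BR k = {x \<in> shift_space k. \<forall>e>0. banach_upper_density (hitting_times x (sball k x e)) > 0}"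

definition Phi_n :: "(nat \<Rightarrow> nat) \<Rightarrow> (nat \<Rightarrow> nat) \<Rightarrow> nat \<Rightarrow> real \<Rightarrow> real" where
  "Phi_n x y n t = real (card {i. i < n \<and> sdist ((shift ^^ i) x) ((shift ^^ i) y) < t}) / real n"

definition Phi_lower :: "(nat \<Rightarrow> nat) \<Rightarrow> (nat \<Rightarrow> nat) \<Rightarrow> real \<Rightarrow> ereal" where
  "Phi_lower x y t = liminf (\<lambda>n. ereal (Phi_n x y n t))"

definition Phi_upper :: "(nat \<Rightarrow> nat) \<Rightarrow> (nat \<Rightarrow> nat) \<Rightarrow> real \<Rightarrow> ereal" where
  "Phi_upper x y t = limsup (\<lambda>n. ereal (Phi_n x y n t))"

definition DC1_pair :: "(nat \<Rightarrow> nat) \<Rightarrow> (nat \<Rightarrow> nat) \<Rightarrow> bool" where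
  "DC1_pair x y \<longleftrightarrow> (\<exists>s>0. Phi_lower x y s = 0) \<and> (\<forall>t>0. Phi_upper x y t = 1)"

definition DC1_scrambled :: "(nat \<Rightarrow> nat) set \<Rightarrow> bool" where
  "DC1_scrambled S \<longleftrightarrow> (\<exists>x\<in>S. \<exists>y\<in>S. x \<noteq> y) \<and>
     (\<forall>x\<in>S. \<forall>y\<in>S. x \<noteq> y \<longrightarrow> DC1_pair x y)"

end

theory Submission
  imports Defs "HOL-Library.Discrete_Functions"
begin


lemma sdist_term_le: "(if x n = y n then 0 else 1) / 2 ^ Suc n \<le> (1/2::real) ^ Suc n"
  by (simp add: power_one_over)

lemma sdist_summable: "summable (\<lambda>n. (if x n = y n then 0 else 1) / (2::real) ^ Suc n)"
proof (rule summable_comparison_test[where g="\<lambda>n. (1/2::real) ^ Suc n"])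
  show "\<exists>N. \<forall>n\<ge>N. norm ((if x n = y n then 0 else 1) / (2::real) ^ Suc n) \<le> (1/2) ^ Suc n"
    by (auto simp: power_one_over)
  show "summable (\<lambda>n. (1/2::real) ^ Suc n)"
    using summable_geometric[of "1/2::real"] by (simp add: summable_mult)
qed

lemma sdist_ge:
  assumes "x l \<noteq> y l" shows "sdist x y \<ge> 1 / 2 ^ Suc l"
proof -
  have "(if x l = y l then 0 else 1) / (2::real) ^ Suc l \<le> sdist x y"
    unfolding sdist_def using sum_le_suminf[OF sdist_summable[of x y], of "{l}"] by auto
  thus ?thesis using assms by simp
qed

lemma sdist_nonneg: "sdist x y \<ge> 0"
  unfolding sdist_def using sdist_summable by (rule suminf_nonneg) auto

lemma sdist_less_agree:
  assumes "sdist x y < 1 / 2 ^ m" "l < m" shows "x l = y l"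
proof (rule ccontr)
  assume "x l \<noteq> y l"
  hence "sdist x y \<ge> 1 / 2 ^ Suc l" by (rule sdist_ge)
  moreover have "(1::real) / 2 ^ m \<le> 1 / 2 ^ Suc l"
    using assms(2) by (intro divide_left_mono power_increasing) auto
  ultimately show False using assms(1) by simp
qed

lemma sdist_agree_le:
  assumes "\<And>l. l < m \<Longrightarrow> x l = y l" shows "sdist x y \<le> 1 / 2 ^ m"
proof -
  let ?f = "\<lambda>n. (if x n = y n then 0 else 1) / (2::real) ^ Suc n"
  have "sdist x y = (\<Sum>n. ?f (n + m)) + (\<Sum>i<m. ?f i)"
    unfolding sdist_def using suminf_split_initial_segment[OF sdist_summable, where k=m] by simp
  also have "(\<Sum>i<m. ?f i) = 0" using assms by simp
  also have "(\<Sum>n. ?f (n + m)) \<le> (\<Sum>n. (1/2::real) ^ Suc (n + m))"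
  proof (rule suminf_le)
    show "summable (\<lambda>n. ?f (n + m))" using summable_ignore_initial_segment[OF sdist_summable] by simp
    show "summable (\<lambda>n. (1/2::real) ^ Suc (n + m))"
      using summable_mult2[OF summable_geometric[of "1/2::real"], of "(1/2)^Suc m"] by (simp add: power_add mult_ac)
  qed (auto simp: power_one_over)
  also have "(\<Sum>n. (1/2::real) ^ Suc (n + m)) = (1/2)^m"
  proof -
    have "(\<Sum>n. (1/2::real) ^ Suc (n + m)) = (1/2)^m * (1/2) * (\<Sum>n. (1/2)^n)"
      by (subst suminf_mult[symmetric]) (auto simp: power_add mult_ac summable_geometric)
    also have "\<dots> = (1/2)^m" by (simp add: suminf_geometric)
    finally show ?thesis .
  qed
  finally show ?thesis by (simp add: power_one_over)
qed

lemma shift_pow: "(shift ^^ n) x = (\<lambda>i. x (i + n))"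
  by (induction n) (auto simp: shift_def)




fun kind :: "nat \<Rightarrow> nat option" where
  "kind q = (if q = 0 then None else
     (case kind (q div 3) of Some h \<Rightarrow> Some (Suc h)
      | None \<Rightarrow> (if q mod 3 = 2 then Some 0 else None)))"

declare kind.simps[simp del]

lemma kind_0[simp]: "kind 0 = None" by (simp add: kind.simps)

lemma kind_small: "t < 3 \<Longrightarrow> kind t = (if t = 2 then Some 0 else None)"
  by (subst kind.simps) auto

lemma kind_split:
  "q' < 3 ^ r \<Longrightarrow> kind (s * 3 ^ r + q') = (case kind s of Some h \<Rightarrow> Some (h + r) | None \<Rightarrow> kind q')"
proof (induction r arbitrary: q')
  case 0
  then show ?case by (cases "kind s") auto
next
  case (Suc r)
  have d: "(s * 3 ^ Suc r + q') div 3 = s * 3 ^ r + q' div 3" by simp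
  have m: "(s * 3 ^ Suc r + q') mod 3 = q' mod 3"
  proof -
    have "s * 3 ^ Suc r + q' = q' + (s * 3 ^ r) * 3" by simp
    thus ?thesis by (metis mod_mult_self1)
  qed
  have lt: "q' div 3 < 3 ^ r" using Suc.prems by auto
  have IH: "kind (s * 3 ^ r + q' div 3) = (case kind s of Some h \<Rightarrow> Some (h + r) | None \<Rightarrow> kind (q' div 3))"
    using Suc.IH[OF lt] .
  show ?case
  proof (cases "kind s")
    case None
    then have s0: "kind (s * 3 ^ r + q' div 3) = kind (q' div 3)" using IH by simp
    show ?thesis
    proof (cases "s * 3 ^ Suc r + q' = 0")
      case True then show ?thesis using None by simp
    next
      case False
      then have "kind (s * 3 ^ Suc r + q') = (case kind (q' div 3) of Some h \<Rightarrow> Some (Suc h)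
        | None \<Rightarrow> (if q' mod 3 = 2 then Some 0 else None))"
        by (subst kind.simps) (simp only: d m s0 if_False)
      also have "\<dots> = kind q'"
        by (cases "q' = 0") (simp_all add: kind.simps[of q'])
      finally show ?thesis using None by simp
    qed
  next
    case (Some h)
    then have "s \<noteq> 0" by (metis kind_0 option.distinct(1))
    hence nz: "s * 3 ^ Suc r + q' \<noteq> 0" by simp
    have "kind (s * 3 ^ Suc r + q') = (case kind (s * 3 ^ r + q' div 3) of Some h \<Rightarrow> Some (Suc h)
        | None \<Rightarrow> (if q' mod 3 = 2 then Some 0 else None))"
      by (subst kind.simps) (simp only: nz d m if_False)
    also have "\<dots> = Some (Suc (h + r))" using IH Some by simp
    finally have "kind (s * 3 ^ Suc r + q') = Some (Suc (h + r))" .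
    then show ?thesis using Some by simp
  qed
qed

lemma kind_top: "q' < 3 ^ r \<Longrightarrow> t < 3 \<Longrightarrow> kind (t * 3 ^ r + q') = (if t = 2 then Some r else kind q')"
  using kind_split[of q' r t] kind_small[of t] by auto

definition Lset :: "nat \<Rightarrow> nat \<Rightarrow> nat set" where
  "Lset j J = {q. q < 3 ^ J \<and> (\<forall>h. kind q = Some h \<longrightarrow> h < j \<or> J \<le> h)}"

lemma card_Lset: "j \<le> J \<Longrightarrow> card (Lset j J) \<le> 3 ^ j * 2 ^ (J - j)"
proof (induction J rule: dec_induct)
  case base
  have "Lset j j \<subseteq> {..<3^j}" by (auto simp: Lset_def)
  then show ?case by (metis card_lessThan card_mono finite_lessThan diff_self_eq_0 mult.right_neutral power_0)
next
  case (step J)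
  have sub: "Lset j (Suc J) \<subseteq> (\<lambda>(t, q'). t * 3 ^ J + q') ` ({0, 1} \<times> Lset j J)"
  proof
    fix q assume q: "q \<in> Lset j (Suc J)"
    define t where "t = q div 3 ^ J"
    define q' where "q' = q mod 3 ^ J"
    have qe: "q = t * 3 ^ J + q'" using div_mult_mod_eq[of q "3^J"] by (simp add: t_def q'_def)
    have t3: "t < 3" using q by (auto simp: Lset_def t_def less_mult_imp_div_less)
    have q'lt: "q' < 3 ^ J" by (simp add: q'_def)
    have kq: "kind q = (if t = 2 then Some J else kind q')" using kind_top[OF q'lt t3] qe by simp
    have "t \<noteq> 2" using q kq step.hyps by (auto simp: Lset_def)
    hence "t \<in> {0, 1}" using t3 by auto
    moreover have "q' \<in> Lset j J" using q kq \<open>t \<noteq> 2\<close> q'lt by (auto simp: Lset_def)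
    ultimately show "q \<in> (\<lambda>(t, q'). t * 3 ^ J + q') ` ({0, 1} \<times> Lset j J)" using qe by force
  qed
  have fin: "finite (Lset j J)" by (auto simp: Lset_def)
  have "card (Lset j (Suc J)) \<le> card ((\<lambda>(t, q'). t * 3 ^ J + q') ` ({0::nat, 1} \<times> Lset j J))"
    by (rule card_mono) (use fin sub in auto)
  also have "\<dots> \<le> card ({0::nat, 1} \<times> Lset j J)" by (rule card_image_le) (use fin in auto)
  also have "\<dots> = 2 * card (Lset j J)" by (simp add: card_cartesian_product)
  also have "\<dots> \<le> 2 * (3 ^ j * 2 ^ (J - j))" using step.IH by simp
  also have "\<dots> = 3 ^ j * 2 ^ (Suc J - j)" using step.hyps by (simp add: Suc_diff_le)
  finally show ?case .
qed

lemma card_cantor_interval: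
  "card {q. u \<le> q \<and> q < u + K \<and> kind q = None} \<le> (K div 3 ^ r + 2) * 2 ^ r"
proof -
  let ?C = "{q. q < 3 ^ r \<and> kind q = None}"
  have C: "card ?C \<le> 2 ^ r"
  proof -
    have "?C \<subseteq> Lset 0 r" by (auto simp: Lset_def)
    hence "card ?C \<le> card (Lset 0 r)" by (rule card_mono[rotated]) (auto simp: Lset_def)
    also have "\<dots> \<le> 2 ^ r" using card_Lset[of 0 r] by simp
    finally show ?thesis .
  qed
  have sub: "{q. u \<le> q \<and> q < u + K \<and> kind q = None} \<subseteq>
      (\<lambda>(s, q'). s * 3 ^ r + q') ` ({u div 3 ^ r .. (u + K) div 3 ^ r} \<times> ?C)"
  proof
    fix q assume q: "q \<in> {q. u \<le> q \<and> q < u + K \<and> kind q = None}"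
    define s where "s = q div 3 ^ r"
    define q' where "q' = q mod 3 ^ r"
    have qe: "q = s * 3 ^ r + q'" using div_mult_mod_eq[of q "3^r"] by (simp add: s_def q'_def)
    have q'lt: "q' < 3 ^ r" by (simp add: q'_def)
    have "kind q' = None" using q kind_split[OF q'lt, of s] qe by (cases "kind s") auto
    moreover have "s \<in> {u div 3 ^ r .. (u + K) div 3 ^ r}" using q
      by (auto simp: s_def div_le_mono)
    ultimately show "q \<in> (\<lambda>(s, q'). s * 3 ^ r + q') ` ({u div 3 ^ r .. (u + K) div 3 ^ r} \<times> ?C)"
      using qe q'lt by force
  qed
  have "card {q. u \<le> q \<and> q < u + K \<and> kind q = None} \<le>
      card ((\<lambda>(s, q'). s * 3 ^ r + q') ` ({u div 3 ^ r .. (u + K) div 3 ^ r} \<times> ?C))"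
    by (rule card_mono[OF _ sub]) auto
  also have "\<dots> \<le> card ({u div 3 ^ r .. (u + K) div 3 ^ r} \<times> ?C)" by (rule card_image_le) auto
  also have "\<dots> = card {u div 3 ^ r .. (u + K) div 3 ^ r} * card ?C" by (simp add: card_cartesian_product)
  also have "\<dots> \<le> (K div 3 ^ r + 2) * 2 ^ r"
  proof (rule mult_mono)
    have "(u + K) div 3 ^ r \<le> u div 3 ^ r + K div 3 ^ r + 1"
    proof -
      have a: "u mod 3 ^ r + K mod 3 ^ r < 2 * 3 ^ r"
        proof -
        have "u mod 3 ^ r < (3::nat) ^ r" "K mod 3 ^ r < (3::nat) ^ r" by simp_all
        thus ?thesis unfolding mult_2 by (rule add_strict_mono)
      qed
      have "(u mod 3 ^ r + K mod 3 ^ r) div 3 ^ r < 2"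
        using less_mult_imp_div_less[OF a] .
      thus ?thesis by (simp add: div_add1_eq[of u K])
    qed
    thus "card {u div 3 ^ r .. (u + K) div 3 ^ r} \<le> K div 3 ^ r + 2" by simp
  qed (use C in auto)
  finally show ?thesis .
qed




definition blkcode :: "(nat \<Rightarrow> bool) \<Rightarrow> nat \<Rightarrow> nat" where
  "blkcode z m = (if odd m \<and> z (fst (prod_decode (m div 2))) then 1 else 0)"

definition cval :: "(nat \<Rightarrow> bool) \<Rightarrow> nat \<Rightarrow> nat" where
  "cval z h = blkcode z (floor_log h)"

definition Alen :: "nat list \<Rightarrow> nat" where
  "Alen w = 2 * length w + 2"

definition pt :: "nat list \<Rightarrow> (nat \<Rightarrow> bool) \<Rightarrow> nat \<Rightarrow> nat" where
  "pt w z p = (case kind (p div Alen w) of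
      None \<Rightarrow> (if p mod Alen w < length w then w ! (p mod Alen w) else 0)
    | Some h \<Rightarrow> (if odd p then 1 else cval z h))"

lemma Alen_pos: "Alen w > 0" by (simp add: Alen_def)
lemma Alen_even: "even (Alen w)" by (simp add: Alen_def)

lemma blkcode_le: "blkcode z m \<le> 1" by (simp add: blkcode_def)

lemma pt_in:
  assumes "set w \<subseteq> {..<k}" "k \<ge> 2" shows "pt w z \<in> shift_space k"
proof -
  have "pt w z p < k" for p
  proof (cases "kind (p div Alen w)")
    case None
    then show ?thesis using assms nth_mem[of "p mod Alen w" w] by (auto simp: pt_def subset_iff)
  next
    case (Some h)
    then show ?thesis using assms blkcode_le[of z "floor_log h"] by (auto simp: pt_def cval_def)
  qed
  thus ?thesis by (simp add: shift_space_def)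
qed

lemma pt_prefix: "p < length w \<Longrightarrow> pt w z p = w ! p"
  by (simp add: pt_def Alen_def)

lemma pt_zero: "pt w z (length w) = 0" "pt w z (Suc (length w)) = 0"
  by (simp_all add: pt_def Alen_def)

lemma pt_period:
  assumes "p < Alen w * 3 ^ j" shows "pt w z (p + Alen w * 3 ^ j) = pt w z p"
proof -
  let ?A = "Alen w"
  have d: "(p + ?A * 3 ^ j) div ?A = 1 * 3 ^ j + p div ?A" using Alen_pos[of w] by simp
  have m: "(p + ?A * 3 ^ j) mod ?A = p mod ?A" by simp
  have lt: "p div ?A < 3 ^ j" using assms by (simp add: Alen_pos less_mult_imp_div_less mult.commute)
  have k: "kind ((p + ?A * 3 ^ j) div ?A) = kind (p div ?A)"
    unfolding d using kind_top[OF lt, of 1] by simp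
  have par: "odd (p + ?A * 3 ^ j) = odd p" using Alen_even[of w] by simp
  show ?thesis unfolding pt_def k m par ..
qed

lemma pt_odd_zero: "odd p \<Longrightarrow> pt w z p = 0 \<Longrightarrow> kind (p div Alen w) = None"
  by (cases "kind (p div Alen w)") (auto simp: pt_def)

lemma pt_Some_even: "kind (p div Alen w) = Some h \<Longrightarrow> even p \<Longrightarrow> pt w z p = cval z h"
  by (simp add: pt_def)

lemma pt_diff: "pt w z p \<noteq> pt w z' p \<Longrightarrow> \<exists>h. kind (p div Alen w) = Some h \<and> even p \<and> cval z h \<noteq> cval z' h"
  by (cases "kind (p div Alen w)") (auto simp: pt_def split: if_splits)

lemma exists_small: "e > 0 \<Longrightarrow> \<exists>m::nat. 1 / 2 ^ m < (e::real)"
proof -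
  assume "e > 0"
  then obtain m where "(1/2::real) ^ m < e" using real_arch_pow_inv[of e "1/2"] by auto
  thus ?thesis by (auto simp: power_one_over)
qed

lemma pt_Rec:
  assumes "set w \<subseteq> {..<k}" "k \<ge> 2" shows "pt w z \<in> Rec k"
proof -
  let ?x = "pt w z"
  have "hitting_times ?x (sball k ?x e) \<noteq> {}" if e: "e > 0" for e
  proof -
    obtain m where m: "1 / 2 ^ m < e" using exists_small[OF e] by auto
    define n where "n = Alen w * 3 ^ m"
    have "m < 3 ^ m" using less_exp[of m] power_mono[of "2::nat" 3 m] by linarith
    also have "3 ^ m \<le> n" using Alen_pos[of w] by (simp add: n_def)
    finally have mn: "m \<le> n" by simp
    have n1: "n \<ge> 1" using Alen_pos[of w] by (simp add: n_def)
    have sh: "(shift ^^ n) ?x = (\<lambda>i. ?x (i + n))" by (rule shift_pow)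
    have agree: "?x l = (shift ^^ n) ?x l" if "l < m" for l
    proof -
      have "?x (l + n) = ?x l" using pt_period[of l w m z] that mn by (simp add: n_def)
      thus ?thesis by (simp add: sh)
    qed
    have "sdist ?x ((shift ^^ n) ?x) \<le> 1 / 2 ^ m" by (rule sdist_agree_le) (use agree in auto)
    hence "sdist ?x ((shift ^^ n) ?x) < e" using m by linarith
    moreover have "(shift ^^ n) ?x \<in> shift_space k"
      using pt_in[OF assms, of z] by (simp add: sh shift_space_def)
    ultimately have "n \<in> hitting_times ?x (sball k ?x e)"
      using n1 by (simp add: hitting_times_def sball_def)
    thus ?thesis by auto
  qed
  thus ?thesis using pt_in[OF assms] by (simp add: Rec_def)
qed




lemma div_add_le: "(b::nat) > 0 \<Longrightarrow> (x + y) div b \<le> x div b + y div b + 1"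
proof -
  assume b: "b > 0"
  have a: "x mod b + y mod b < 2 * b"
  proof -
    have "x mod b < b" "y mod b < b" using b by simp_all
    thus ?thesis unfolding mult_2 by (rule add_strict_mono)
  qed
  have "(x mod b + y mod b) div b < 2" using less_mult_imp_div_less[OF a] .
  thus ?thesis by (simp add: div_add1_eq[of x y])
qed

lemma count_shifted:
  assumes A: "A > 0"
  shows "card {n. a \<le> n \<and> n < a + M \<and> kind ((n + c) div A) = None}
     \<le> A * (((M div A + 2) div 3 ^ r + 2) * 2 ^ r)"
proof -
  define u where "u = (a + c) div A"
  define K where "K = M div A + 2"
  let ?Q = "{q. u \<le> q \<and> q < u + K \<and> kind q = None}"
  have sub: "{n. a \<le> n \<and> n < a + M \<and> kind ((n + c) div A) = None}
      \<subseteq> (\<lambda>(q, d). A * q + d - c) ` (?Q \<times> {..<A})"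
  proof
    fix n assume n: "n \<in> {n. a \<le> n \<and> n < a + M \<and> kind ((n + c) div A) = None}"
    define q where "q = (n + c) div A"
    define d where "d = (n + c) mod A"
    have e: "A * q + d - c = n" using div_mult_mod_eq[of "n + c" A] by (simp add: q_def d_def mult.commute)
    have "u \<le> q" unfolding u_def q_def by (rule div_le_mono) (use n in simp)
    moreover have "q < u + K"
    proof -
      have "q \<le> (a + c + M) div A" unfolding q_def by (rule div_le_mono) (use n in simp)
      also have "\<dots> \<le> u + M div A + 1" unfolding u_def by (rule div_add_le[OF A])
      finally show ?thesis by (simp add: K_def)
    qed
    moreover have "d < A" using A by (simp add: d_def)
    moreover have "kind q = None" using n by (simp add: q_def)
    ultimately have "(q, d) \<in> ?Q \<times> {..<A}" by simp
    thus "n \<in> (\<lambda>(q, d). A * q + d - c) ` (?Q \<times> {..<A})"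
      by (rule rev_image_eqI) (simp add: e)
  qed
  have "card {n. a \<le> n \<and> n < a + M \<and> kind ((n + c) div A) = None} \<le> card ((\<lambda>(q, d). A * q + d - c) ` (?Q \<times> {..<A}))"
    by (rule card_mono[OF _ sub]) auto
  also have "\<dots> \<le> card (?Q \<times> {..<A})" by (rule card_image_le) auto
  also have "\<dots> = card ?Q * A" by (simp add: card_cartesian_product)
  also have "\<dots> \<le> ((K div 3 ^ r + 2) * 2 ^ r) * A"
  proof -
    have "?Q = {q. u \<le> q \<and> q < u + K \<and> kind q = None}" ..
    thus ?thesis using card_cantor_interval[of u K r] by simp
  qed
  finally show ?thesis by (simp add: K_def mult.commute)
qed

lemma banach_le:
  assumes "\<And>a m. m \<ge> M0 \<Longrightarrow> m > 0 \<Longrightarrow> real (card (S \<inter> {a..<a + m})) / real m \<le> e"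
  shows "banach_upper_density S \<le> e"
proof -
  define F where "F M = (SUP p \<in> {(a::nat, m::nat). m \<ge> M \<and> m > 0}.
        real (card (S \<inter> {fst p..<fst p + snd p})) / real (snd p))" for M
  have bdd: "bdd_above ((\<lambda>p. real (card (S \<inter> {fst p..<fst p + snd p})) / real (snd p)) ` {(a::nat, m::nat). m \<ge> M \<and> m > 0})" for M
  proof (rule bdd_aboveI2)
    fix p :: "nat \<times> nat"
    have "card (S \<inter> {fst p..<fst p + snd p}) \<le> card {fst p..<fst p + snd p}"
      by (rule card_mono) auto
    hence "real (card (S \<inter> {fst p..<fst p + snd p})) \<le> real (snd p)" by simp
    thus "real (card (S \<inter> {fst p..<fst p + snd p})) / real (snd p) \<le> 1"
      by (cases "snd p = 0") (auto simp: divide_le_eq)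
  qed
  have F0: "F M \<ge> 0" for M
  proof -
    have mem: "(0, Suc M) \<in> {(a::nat, m::nat). m \<ge> M \<and> m > 0}" by simp
    have "0 \<le> real (card (S \<inter> {fst (0::nat, Suc M)..<fst (0::nat, Suc M) + snd (0::nat, Suc M)})) / real (snd (0::nat, Suc M))"
      by simp
    also have "\<dots> \<le> F M" unfolding F_def by (rule cSUP_upper[OF mem bdd])
    finally show ?thesis .
  qed
  have "F M0 \<le> e" unfolding F_def
  proof (rule cSUP_least)
    show "{(a::nat, m::nat). m \<ge> M0 \<and> m > 0} \<noteq> {}" by (auto intro!: exI[of _ "Suc M0"])
  qed (use assms in auto)
  moreover have "banach_upper_density S \<le> F M0"
    unfolding banach_upper_density_def F_def[symmetric]
    by (rule cINF_lower) (use F0 in \<open>auto intro!: bdd_belowI2\<close>)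
  ultimately show ?thesis by simp
qed




lemma pt_hit_sub:
  assumes "set w \<subseteq> {..<k}" "k \<ge> 2"
  shows "hitting_times (pt w z) (sball k (pt w z) (1 / 2 ^ (length w + 2)))
    \<subseteq> {n. kind ((n + length w) div Alen w) = None} \<union> {n. kind ((n + Suc (length w)) div Alen w) = None}"
proof
  fix n assume n: "n \<in> hitting_times (pt w z) (sball k (pt w z) (1 / 2 ^ (length w + 2)))"
  let ?x = "pt w z"
  have "sdist ?x ((shift ^^ n) ?x) < 1 / 2 ^ (length w + 2)" using n by (simp add: hitting_times_def sball_def)
  hence "?x l = ?x (l + n)" if "l < length w + 2" for l
    using sdist_less_agree[OF _ that] by (simp add: shift_pow)
  hence z1: "?x (n + length w) = 0" and z2: "?x (n + Suc (length w)) = 0"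
    using pt_zero[of w z] by (simp_all add: add.commute)
  show "n \<in> {n. kind ((n + length w) div Alen w) = None} \<union> {n. kind ((n + Suc (length w)) div Alen w) = None}"
  proof (cases "odd (n + length w)")
    case True then show ?thesis using pt_odd_zero[OF True z1] by simp
  next
    case False then have "odd (n + Suc (length w))" by simp
    then show ?thesis using pt_odd_zero[OF _ z2] by simp
  qed
qed

lemma density_bound:
  assumes A: "A > 0" and e: "e > 0"
  shows "\<exists>M0. \<forall>a M. M \<ge> M0 \<longrightarrow> M > 0 \<longrightarrow>
    real (card {n. a \<le> n \<and> n < a + M \<and> kind ((n + c) div A) = None})
  + real (card {n. a \<le> n \<and> n < a + M \<and> kind ((n + c') div A) = None}) \<le> e * real M"
proof -
  obtain r where r: "(2/3::real) ^ r < e / (12 * A)"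
    using real_arch_pow_inv[of "e / (12 * A)" "2/3"] e A by auto
  define M0 where "M0 = nat \<lceil>8 * A * 2 ^ r / e\<rceil> + 1"
  show ?thesis
  proof (intro exI allI impI)
    fix a M assume M: "M \<ge> M0" "M > (0::nat)"
    define B1 where "B1 = (M div A + 2) div 3 ^ r"
    have "B1 * 3 ^ r \<le> M div A + 2" unfolding B1_def by (rule div_times_less_eq_dividend)
    also have "\<dots> \<le> M + 2" by simp
    also have "\<dots> \<le> 3 * M" using M by simp
    finally have "real (B1 * 3 ^ r) \<le> real (3 * M)" by (simp only: of_nat_le_iff)
    hence "real B1 * 3 ^ r \<le> 3 * real M" by simp
    hence B1r: "real B1 \<le> 3 * real M / 3 ^ r" by (simp add: field_simps)
    have each: "real (card {n. a \<le> n \<and> n < a + M \<and> kind ((n + d) div A) = None}) \<le> A * ((B1 + 2) * 2 ^ r)" for d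
    proof -
      have "card {n. a \<le> n \<and> n < a + M \<and> kind ((n + d) div A) = None} \<le> A * ((B1 + 2) * 2 ^ r)"
        using count_shifted[OF A, of a M d r] unfolding B1_def .
      hence "real (card {n. a \<le> n \<and> n < a + M \<and> kind ((n + d) div A) = None}) \<le> real (A * ((B1 + 2) * 2 ^ r))"
        by (simp only: of_nat_le_iff)
      thus ?thesis by simp
    qed
    have "real A * ((B1 + 2) * 2 ^ r) = real A * real B1 * 2 ^ r + 2 * A * 2 ^ r" by (simp add: algebra_simps)
    also have "real A * real B1 * 2 ^ r \<le> real A * (3 * real M / 3 ^ r) * 2 ^ r"
      using B1r A by (intro mult_right_mono mult_left_mono) auto
    also have "A * (3 * real M / 3 ^ r) * 2 ^ r = 3 * A * M * (2/3) ^ r"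
      by (simp add: power_divide)
    also have "\<dots> \<le> 3 * A * M * (e / (12 * A))"
      using r A M by (intro mult_left_mono) auto
    also have "\<dots> = e * M / 4" using A by simp
    finally have t1: "real A * ((B1 + 2) * 2 ^ r) \<le> e * M / 4 + 2 * A * 2 ^ r" by simp
    have "8 * A * 2 ^ r / e \<le> real M0" unfolding M0_def by linarith
    also have "\<dots> \<le> M" using M by simp
    finally have "8 * A * 2 ^ r \<le> e * M" using e by (simp add: field_simps)
    hence "2 * A * 2 ^ r \<le> e * M / 4" by simp
    with t1 have "real A * ((B1 + 2) * 2 ^ r) \<le> e * M / 2" by simp
    thus "real (card {n. a \<le> n \<and> n < a + M \<and> kind ((n + c) div A) = None})
      + real (card {n. a \<le> n \<and> n < a + M \<and> kind ((n + c') div A) = None}) \<le> e * real M"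
      using each[of c] each[of c'] unfolding of_nat_mult by linarith
  qed
qed

lemma pt_notBR:
  assumes "set w \<subseteq> {..<k}" "k \<ge> 2" shows "pt w z \<notin> BR k"
proof
  assume br: "pt w z \<in> BR k"
  define H where "H = hitting_times (pt w z) (sball k (pt w z) (1 / 2 ^ (length w + 2)))"
  have pos: "banach_upper_density H > 0" using br unfolding BR_def H_def by auto
  let ?A = "Alen w"
  have *: "banach_upper_density H \<le> e" if e: "e > 0" for e
  proof -
    obtain M0 where M0: "\<And>a M. M \<ge> M0 \<Longrightarrow> M > 0 \<Longrightarrow>
      real (card {n. a \<le> n \<and> n < a + M \<and> kind ((n + length w) div ?A) = None})
    + real (card {n. a \<le> n \<and> n < a + M \<and> kind ((n + Suc (length w)) div ?A) = None}) \<le> e * real M"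
      using density_bound[OF Alen_pos[of w] e, of "length w" "Suc (length w)"] by blast
    show ?thesis
    proof (rule banach_le[of M0])
      fix a m assume m: "m \<ge> M0" "m > (0::nat)"
      have sub: "H \<inter> {a..<a + m} \<subseteq> {n. a \<le> n \<and> n < a + m \<and> kind ((n + length w) div ?A) = None}
          \<union> {n. a \<le> n \<and> n < a + m \<and> kind ((n + Suc (length w)) div ?A) = None}"
        using pt_hit_sub[OF assms, of z] unfolding H_def by auto
      have "card (H \<inter> {a..<a + m}) \<le> card ({n. a \<le> n \<and> n < a + m \<and> kind ((n + length w) div ?A) = None}
          \<union> {n. a \<le> n \<and> n < a + m \<and> kind ((n + Suc (length w)) div ?A) = None})"
        by (rule card_mono[OF _ sub]) auto
      also have "\<dots> \<le> card {n. a \<le> n \<and> n < a + m \<and> kind ((n + length w) div ?A) = None}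
          + card {n. a \<le> n \<and> n < a + m \<and> kind ((n + Suc (length w)) div ?A) = None}"
        by (rule card_Un_le)
      finally have "real (card (H \<inter> {a..<a + m})) \<le> e * real m"
        using M0[OF m, of a] by linarith
      thus "real (card (H \<inter> {a..<a + m})) / real m \<le> e" using m by (simp add: divide_le_eq mult.commute)
    qed
  qed
  have "banach_upper_density H \<le> banach_upper_density H / 2" by (rule *) (use pos in simp)
  thus False using pos by simp
qed




lemma liminf_zero:
  fixes X :: "nat \<Rightarrow> real"
  assumes "\<And>n. 0 \<le> X n" "\<And>e N. e > 0 \<Longrightarrow> \<exists>n\<ge>N. X n \<le> e"
  shows "liminf (\<lambda>n. ereal (X n)) = 0"
proof (rule antisym)
  show "0 \<le> liminf (\<lambda>n. ereal (X n))"
    by (rule Liminf_bounded) (use assms(1) in auto)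
  show "liminf (\<lambda>n. ereal (X n)) \<le> 0"
  proof (rule ereal_le_epsilon2)
    fix e :: real assume e: "0 < e"
    have "(INF m\<in>{N..}. ereal (X m)) \<le> ereal e" for N
    proof -
      obtain n where n: "n \<ge> N" "X n \<le> e" using assms(2)[OF e] by blast
      show ?thesis by (rule INF_lower2[of n]) (use n in auto)
    qed
    hence "liminf (\<lambda>n. ereal (X n)) \<le> ereal e" unfolding liminf_SUP_INF by (rule SUP_least)
    thus "liminf (\<lambda>n. ereal (X n)) \<le> 0 + ereal e" by simp
  qed
qed

lemma limsup_one:
  fixes X :: "nat \<Rightarrow> real"
  assumes "\<And>n. X n \<le> 1" "\<And>e N. e > 0 \<Longrightarrow> \<exists>n\<ge>N. X n \<ge> 1 - e"
  shows "limsup (\<lambda>n. ereal (X n)) = 1"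
proof (rule antisym)
  show "limsup (\<lambda>n. ereal (X n)) \<le> 1"
    by (rule Limsup_bounded) (use assms(1) in auto)
  show "1 \<le> limsup (\<lambda>n. ereal (X n))"
  proof (rule ereal_le_epsilon2)
    fix e :: real assume e: "0 < e"
    have "ereal (1 - e) \<le> (SUP m\<in>{N..}. ereal (X m))" for N
    proof -
      obtain n where n: "n \<ge> N" "X n \<ge> 1 - e" using assms(2)[OF e] by blast
      show ?thesis by (rule SUP_upper2[of n]) (use n in auto)
    qed
    hence "ereal (1 - e) \<le> limsup (\<lambda>n. ereal (X n))" unfolding limsup_INF_SUP by (rule INF_greatest)
    thus "1 \<le> limsup (\<lambda>n. ereal (X n)) + ereal e"
      by (cases "limsup (\<lambda>n. ereal (X n))") auto
  qed
qed

lemma Phi_n_nonneg: "0 \<le> Phi_n x y n t" by (simp add: Phi_n_def)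

lemma Phi_n_le1: "Phi_n x y n t \<le> 1"
proof -
  have "card {i. i < n \<and> sdist ((shift ^^ i) x) ((shift ^^ i) y) < t} \<le> card {..<n}"
    by (rule card_mono) auto
  thus ?thesis by (cases "n = 0") (auto simp: Phi_n_def divide_le_eq)
qed

lemma cval_block: "2 ^ m \<le> h \<Longrightarrow> h < 2 * 2 ^ m \<Longrightarrow> cval z h = blkcode z m"
  unfolding cval_def using floor_log_eqI[of h m] by (simp add: le_less_trans[OF _ _])

definition Pset :: "nat list \<Rightarrow> nat \<Rightarrow> nat set" where
  "Pset w m = {p. p < Alen w * 3 ^ (2 * 2 ^ m) \<and> p div Alen w \<in> Lset (2 ^ m) (2 * 2 ^ m)}"

lemma card_Pset: "real (card (Pset w m)) \<le> real (Alen w * 3 ^ (2 * 2 ^ m)) * (2/3) ^ (2 ^ m)"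
proof -
  let ?A = "Alen w" and ?j = "2 ^ m :: nat" and ?J = "2 * 2 ^ m :: nat"
  have sub: "Pset w m \<subseteq> (\<lambda>(q, d). ?A * q + d) ` (Lset ?j ?J \<times> {..<?A})"
  proof
    fix p assume p: "p \<in> Pset w m"
    have "p = (\<lambda>(q, d). ?A * q + d) (p div ?A, p mod ?A)"
      using div_mult_mod_eq[of p ?A] by (simp add: mult.commute)
    moreover have "(p div ?A, p mod ?A) \<in> Lset ?j ?J \<times> {..<?A}"
      using p Alen_pos[of w] by (simp add: Pset_def)
    ultimately show "p \<in> (\<lambda>(q, d). ?A * q + d) ` (Lset ?j ?J \<times> {..<?A})" by (rule image_eqI)
  qed
  have fin: "finite (Lset ?j ?J)" by (simp add: Lset_def)
  have "card (Pset w m) \<le> card ((\<lambda>(q, d). ?A * q + d) ` (Lset ?j ?J \<times> {..<?A}))"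
    by (rule card_mono[OF _ sub]) (use fin in auto)
  also have "\<dots> \<le> card (Lset ?j ?J \<times> {..<?A})" by (rule card_image_le) (use fin in auto)
  also have "\<dots> = card (Lset ?j ?J) * ?A" by (simp add: card_cartesian_product)
  also have "\<dots> \<le> 3 ^ ?j * 2 ^ (?J - ?j) * ?A" using card_Lset[of ?j ?J] by simp
  also have "3 ^ ?j * 2 ^ (?J - ?j) * ?A = 3 ^ ?j * 2 ^ ?j * ?A" by simp
  finally have "real (card (Pset w m)) \<le> real (3 ^ ?j * 2 ^ ?j * ?A)" by (simp only: of_nat_le_iff)
  also have "\<dots> = real (?A * 3 ^ ?J) * (2/3) ^ ?j"
    by (simp add: power_divide power_add mult_2 field_simps)
  finally show ?thesis .
qed

lemma diff_in_P:
  assumes "blkcode z m = blkcode z' m" "p < Alen w * 3 ^ (2 * 2 ^ m)" "pt w z p \<noteq> pt w z' p"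
  shows "p \<in> Pset w m"
proof (rule ccontr)
  assume np: "p \<notin> Pset w m"
  obtain h where h: "kind (p div Alen w) = Some h" "even p" "cval z h \<noteq> cval z' h"
    using pt_diff[OF assms(3)] by blast
  have "p div Alen w < 3 ^ (2 * 2 ^ m)" using assms(2) by (simp add: Alen_pos less_mult_imp_div_less mult.commute)
  hence "2 ^ m \<le> h \<and> h < 2 * 2 ^ m" using np h(1) assms(2) by (auto simp: Pset_def Lset_def)
  hence "cval z h = cval z' h" using assms(1) cval_block by auto
  thus False using h(3) by simp
qed

lemma agree_in_P:
  assumes "blkcode z m \<noteq> blkcode z' m" "p < Alen w * 3 ^ (2 * 2 ^ m)" "even p" "pt w z p = pt w z' p"
  shows "p \<in> Pset w m"
proof (rule ccontr)
  assume np: "p \<notin> Pset w m"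
  have "p div Alen w < 3 ^ (2 * 2 ^ m)" using assms(2) by (simp add: Alen_pos less_mult_imp_div_less mult.commute)
  then obtain h where h: "kind (p div Alen w) = Some h" "2 ^ m \<le> h" "h < 2 * 2 ^ m"
    using np assms(2) by (auto simp: Pset_def Lset_def)
  have "pt w z p = blkcode z m" "pt w z' p = blkcode z' m"
    using pt_Some_even[OF h(1) assms(3)] cval_block[OF h(2,3)] by auto
  thus False using assms(1,4) by simp
qed




lemma n_ratio: "real (Alen w * 3 ^ (2 * 2 ^ m)) * (2/3) ^ (2 ^ m) = real (Alen w) * 3 ^ (2 ^ m) * 2 ^ (2 ^ m)"
proof -
  have "(3::real) ^ (2 * 2 ^ m) = 3 ^ (2 ^ m) * 3 ^ (2 ^ m)" by (simp add: mult_2 power_add)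
  thus ?thesis by (simp add: power_divide field_simps)
qed

lemma n_ratio_ge1: "1 \<le> real (Alen w * 3 ^ (2 * 2 ^ m)) * (2/3) ^ (2 ^ m)"
proof -
  have "1 \<le> real (Alen w)" using Alen_pos[of w] by simp
  moreover have "(1::real) \<le> 3 ^ (2 ^ m)" "(1::real) \<le> 2 ^ (2 ^ m)" by simp_all
  ultimately have "1 * 1 * 1 \<le> real (Alen w) * 3 ^ (2 ^ m) * 2 ^ (2 ^ m)"
    by (intro mult_mono) auto
  thus ?thesis unfolding n_ratio by simp
qed

lemma Phi_lower_bound:
  assumes "blkcode z m \<noteq> blkcode z' m"
  shows "Phi_n (pt w z) (pt w z') (Alen w * 3 ^ (2 * 2 ^ m)) (1/4) \<le> 3 * (2/3) ^ (2 ^ m)"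
proof -
  define n where "n = Alen w * 3 ^ (2 * 2 ^ m)"
  let ?x = "pt w z" and ?y = "pt w z'" and ?P = "Pset w m"
  define G where "G = {i. i < n \<and> sdist ((shift ^^ i) ?x) ((shift ^^ i) ?y) < 1/4}"
  have npos: "n > 0" using Alen_pos[of w] by (simp add: n_def)
  have sub: "G \<subseteq> ?P \<union> (\<lambda>p. p - 1) ` ?P \<union> {n - 1}"
  proof
    fix i assume i: "i \<in> G"
    have s: "sdist ((shift ^^ i) ?x) ((shift ^^ i) ?y) < 1 / 2 ^ 2" using i by (simp add: G_def)
    have a0: "?x i = ?y i" using sdist_less_agree[OF s, of 0] by (simp add: shift_pow)
    have a1: "?x (Suc i) = ?y (Suc i)" using sdist_less_agree[OF s, of 1] by (simp add: shift_pow)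
    have ilt: "i < n" using i by (simp add: G_def)
    show "i \<in> ?P \<union> (\<lambda>p. p - 1) ` ?P \<union> {n - 1}"
    proof (cases "even i")
      case True
      then have "i \<in> ?P" using agree_in_P[OF assms _ True a0] ilt by (simp add: n_def)
      thus ?thesis by simp
    next
      case False
      show ?thesis
      proof (cases "Suc i < n")
        case True
        have "Suc i \<in> ?P" using agree_in_P[OF assms _ _ a1] True False by (simp add: n_def)
        hence "Suc i - 1 \<in> (\<lambda>p. p - 1) ` ?P" by (rule imageI)
        thus ?thesis by simp
      next
        case False
        then have "i = n - 1" using ilt by linarith
        then show ?thesis by simp
      qed
    qed
  qed
  have finP: "finite ?P" by (simp add: Pset_def)
  have "card G \<le> card (?P \<union> (\<lambda>p. p - 1) ` ?P \<union> {n - 1})"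
    by (rule card_mono[OF _ sub]) (use finP in auto)
  also have "\<dots> \<le> card (?P \<union> (\<lambda>p. p - 1) ` ?P) + card {n - 1}" by (rule card_Un_le)
  also have "\<dots> \<le> card ?P + card ((\<lambda>p. p - 1) ` ?P) + 1" using card_Un_le[of ?P "(\<lambda>p. p - 1) ` ?P"] by simp
  also have "\<dots> \<le> card ?P + card ?P + 1" using card_image_le[OF finP, of "\<lambda>p. p - 1"] by simp
  finally have cG: "real (card G) \<le> 2 * real (card ?P) + 1" by simp
  have cP: "real (card ?P) \<le> real n * (2/3) ^ (2 ^ m)" using card_Pset[of w m] by (simp add: n_def)
  have one: "1 \<le> real n * (2/3) ^ (2 ^ m)" using n_ratio_ge1[of w m] by (simp add: n_def)
  have "real (card G) \<le> 3 * (real n * (2/3) ^ (2 ^ m))" using cG cP one by linarith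
  hence "real (card G) / real n \<le> 3 * (2/3) ^ (2 ^ m)" using npos by (simp add: divide_le_eq mult_ac)
  thus ?thesis by (simp add: Phi_n_def G_def n_def)
qed

lemma Phi_upper_bound:
  assumes "blkcode z m = blkcode z' m" "1 / 2 ^ L < t"
  shows "Phi_n (pt w z) (pt w z') (Alen w * 3 ^ (2 * 2 ^ m)) t \<ge> 1 - 2 * real L * (2/3) ^ (2 ^ m)"
proof -
  define n where "n = Alen w * 3 ^ (2 * 2 ^ m)"
  let ?x = "pt w z" and ?y = "pt w z'" and ?P = "Pset w m"
  define G where "G = {i. i < n \<and> sdist ((shift ^^ i) ?x) ((shift ^^ i) ?y) < t}"
  define Bd where "Bd = {i. i < n \<and> \<not> sdist ((shift ^^ i) ?x) ((shift ^^ i) ?y) < t}"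
  have npos: "n > 0" using Alen_pos[of w] by (simp add: n_def)
  have sub: "Bd \<subseteq> (\<Union>l\<in>{..<L}. (\<lambda>p. p - l) ` ?P) \<union> {n - L..<n}"
  proof
    fix i assume i: "i \<in> Bd"
    have ilt: "i < n" using i by (simp add: Bd_def)
    have "\<exists>l<L. ?x (l + i) \<noteq> ?y (l + i)"
    proof (rule ccontr)
      assume "\<not> (\<exists>l<L. ?x (l + i) \<noteq> ?y (l + i))"
      hence "sdist ((shift ^^ i) ?x) ((shift ^^ i) ?y) \<le> 1 / 2 ^ L"
        by (intro sdist_agree_le) (auto simp: shift_pow)
      thus False using i assms(2) by (simp add: Bd_def)
    qed
    then obtain l where l: "l < L" "?x (l + i) \<noteq> ?y (l + i)" by blast
    show "i \<in> (\<Union>l\<in>{..<L}. (\<lambda>p. p - l) ` ?P) \<union> {n - L..<n}"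
    proof (cases "l + i < n")
      case True
      have "l + i \<in> ?P" using diff_in_P[OF assms(1) _ l(2)] True by (simp add: n_def)
      hence "l + i - l \<in> (\<lambda>p. p - l) ` ?P" by (rule imageI)
      thus ?thesis using l(1) by auto
    next
      case False
      thus ?thesis using ilt l(1) by auto
    qed
  qed
  have finP: "finite ?P" by (simp add: Pset_def)
  have "card Bd \<le> card ((\<Union>l\<in>{..<L}. (\<lambda>p. p - l) ` ?P) \<union> {n - L..<n})"
    by (rule card_mono[OF _ sub]) (use finP in auto)
  also have "\<dots> \<le> card (\<Union>l\<in>{..<L}. (\<lambda>p. p - l) ` ?P) + card {n - L..<n}" by (rule card_Un_le)
  also have "card (\<Union>l\<in>{..<L}. (\<lambda>p. p - l) ` ?P) \<le> (\<Sum>l<L. card ((\<lambda>p. p - l) ` ?P))"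
    by (rule card_UN_le) simp
  also have "\<dots> \<le> (\<Sum>l<L. card ?P)" by (rule sum_mono) (rule card_image_le[OF finP])
  also have "card {n - L..<n} \<le> L" by simp
  finally have cB: "card Bd \<le> L * card ?P + L" by simp
  have un: "G \<union> Bd = {..<n}" and dis: "G \<inter> Bd = {}" by (auto simp: G_def Bd_def)
  have "card G + card Bd = n"
    using card_Un_disjoint[of G Bd] un dis by (simp add: G_def Bd_def)
  hence cG: "real (card G) = real n - real (card Bd)" by linarith
  have cP: "real (card ?P) \<le> real n * (2/3) ^ (2 ^ m)" using card_Pset[of w m] by (simp add: n_def)
  have one: "1 \<le> real n * (2/3) ^ (2 ^ m)" using n_ratio_ge1[of w m] by (simp add: n_def)
  have "real (card Bd) \<le> real L * real (card ?P) + real L" using cB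
    by (metis of_nat_add of_nat_le_iff of_nat_mult)
  also have "\<dots> \<le> real L * (real n * (2/3) ^ (2 ^ m)) + real L * (real n * (2/3) ^ (2 ^ m))"
  proof (rule add_mono)
    show "real L * real (card ?P) \<le> real L * (real n * (2/3) ^ (2 ^ m))" using cP by (intro mult_left_mono) auto
    show "real L \<le> real L * (real n * (2/3) ^ (2 ^ m))" using one
      by (metis mult.right_neutral mult_left_mono of_nat_0_le_iff)
  qed
  finally have "real (card Bd) \<le> 2 * real L * (2/3) ^ (2 ^ m) * real n" by (simp add: algebra_simps)
  hence "real (card G) \<ge> (1 - 2 * real L * (2/3) ^ (2 ^ m)) * real n" using cG by (simp add: algebra_simps)
  hence "real (card G) / real n \<ge> 1 - 2 * real L * (2/3) ^ (2 ^ m)" using npos by (simp add: le_divide_eq)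
  thus ?thesis by (simp add: Phi_n_def G_def n_def)
qed




lemma blkcode_diff:
  assumes "z n0 \<noteq> z' n0"
  shows "blkcode z (2 * prod_encode (n0, R) + 1) \<noteq> blkcode z' (2 * prod_encode (n0, R) + 1)"
    and "R \<le> 2 * prod_encode (n0, R) + 1"
proof -
  have "(2 * prod_encode (n0, R) + 1) div 2 = prod_encode (n0, R)" by simp
  thus "blkcode z (2 * prod_encode (n0, R) + 1) \<noteq> blkcode z' (2 * prod_encode (n0, R) + 1)"
    using assms by (simp add: blkcode_def prod_encode_inverse)
  show "R \<le> 2 * prod_encode (n0, R) + 1" using le_prod_encode_2[of R n0] by simp
qed

lemma big_n: "m \<le> Alen w * 3 ^ (2 * 2 ^ m)"
proof -
  have "m < 2 ^ m" by (rule less_exp)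
  also have "(2::nat) ^ m < 2 ^ (2 ^ m)" using less_exp[of m] by simp
  also have "(2::nat) ^ (2 ^ m) \<le> 3 ^ (2 ^ m)" by (rule power_mono) auto
  also have "(3::nat) ^ (2 ^ m) \<le> 3 ^ (2 * 2 ^ m)" by (rule power_increasing) auto
  also have "\<dots> \<le> Alen w * 3 ^ (2 * 2 ^ m)" using Alen_pos[of w] by simp
  finally show ?thesis by simp
qed

lemma pow_small: "r \<le> m \<Longrightarrow> (2/3::real) ^ (2 ^ m) \<le> (2/3) ^ r"
proof -
  assume "r \<le> m"
  hence "r \<le> 2 ^ m" using less_exp[of m] by linarith
  thus ?thesis by (rule power_decreasing) auto
qed

lemma pt_DC1:
  assumes "z \<noteq> z'" shows "DC1_pair (pt w z) (pt w z')"
proof -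
  obtain n0 where n0: "z n0 \<noteq> z' n0" using assms by auto
  let ?x = "pt w z" and ?y = "pt w z'"
  have low: "Phi_lower ?x ?y (1/4) = 0"
    unfolding Phi_lower_def
  proof (rule liminf_zero)
    show "0 \<le> Phi_n ?x ?y n (1/4)" for n by (rule Phi_n_nonneg)
    fix e :: real and N :: nat assume e: "e > 0"
    obtain r where r: "(2/3::real) ^ r < e / 3" using real_arch_pow_inv[of "e/3" "2/3"] e by auto
    define m where "m = 2 * prod_encode (n0, max N r) + 1"
    have cd: "blkcode z m \<noteq> blkcode z' m" and mR: "max N r \<le> m" using blkcode_diff[of z n0 z' "max N r", OF n0] by (simp_all add: m_def)
    have "Phi_n ?x ?y (Alen w * 3 ^ (2 * 2 ^ m)) (1/4) \<le> 3 * (2/3) ^ (2 ^ m)" by (rule Phi_lower_bound[OF cd])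
    also have "\<dots> \<le> 3 * (2/3) ^ r" using pow_small[of r m] mR by simp
    also have "\<dots> \<le> e" using r by simp
    finally have "Phi_n ?x ?y (Alen w * 3 ^ (2 * 2 ^ m)) (1/4) \<le> e" .
    moreover have "N \<le> Alen w * 3 ^ (2 * 2 ^ m)" using big_n[of m w] mR by simp
    ultimately show "\<exists>n\<ge>N. Phi_n ?x ?y n (1/4) \<le> e" by blast
  qed
  have up: "Phi_upper ?x ?y t = 1" if t: "t > 0" for t
    unfolding Phi_upper_def
  proof (rule limsup_one)
    show "Phi_n ?x ?y n t \<le> 1" for n by (rule Phi_n_le1)
    obtain L where L: "1 / 2 ^ L < t" using exists_small[OF t] by auto
    fix e :: real and N :: nat assume e: "e > 0"
    obtain r where r: "(2/3::real) ^ r < e / (2 * L + 1)"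
      using real_arch_pow_inv[of "e / (2 * L + 1)" "2/3"] e by auto
    define m where "m = 2 * max N r"
    have cd: "blkcode z m = blkcode z' m" by (simp add: blkcode_def m_def)
    have mR: "max N r \<le> m" unfolding m_def by linarith
    have "1 - e \<le> 1 - 2 * real L * (2/3) ^ (2 ^ m)"
    proof -
      have "(2/3::real) ^ (2 ^ m) \<le> (2/3) ^ r" using pow_small[of r m] mR by simp
      hence "2 * real L * (2/3::real) ^ (2 ^ m) \<le> (2 * real L + 1) * (2/3) ^ r"
        by (intro mult_mono) auto
      also have "\<dots> \<le> e" using r by (simp add: field_simps)
      finally show ?thesis by simp
    qed
    also have "\<dots> \<le> Phi_n ?x ?y (Alen w * 3 ^ (2 * 2 ^ m)) t" by (rule Phi_upper_bound[OF cd L])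
    finally have "1 - e \<le> Phi_n ?x ?y (Alen w * 3 ^ (2 * 2 ^ m)) t" .
    moreover have "N \<le> Alen w * 3 ^ (2 * 2 ^ m)" using big_n[of m w] mR by simp
    ultimately show "\<exists>n\<ge>N. 1 - e \<le> Phi_n ?x ?y n t" by blast
  qed
  show ?thesis unfolding DC1_pair_def
    using low up by (intro conjI exI[of _ "1/4"]) auto
qed

lemma pt_inj: assumes "z \<noteq> z'" shows "pt w z \<noteq> pt w z'"
proof -
  obtain n0 where n0: "z n0 \<noteq> z' n0" using assms by auto
  define m where "m = 2 * prod_encode (n0, 0) + 1"
  have cd: "blkcode z m \<noteq> blkcode z' m" using blkcode_diff(1)[of z n0 z' 0, OF n0] by (simp add: m_def)
  define p where "p = Alen w * (2 * 3 ^ (2 ^ m))"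
  have "p div Alen w = 2 * 3 ^ (2 ^ m) + 0" using Alen_pos[of w] by (simp add: p_def)
  hence k: "kind (p div Alen w) = Some (2 ^ m)" using kind_top[of 0 "2 ^ m" 2] by simp
  have ev: "even p" using Alen_even[of w] by (simp add: p_def)
  have "pt w z p = blkcode z m" "pt w z' p = blkcode z' m"
    using pt_Some_even[OF k ev] cval_block[of m "2 ^ m"] by auto
  thus ?thesis using cd by metis
qed

lemma uncountable_bool_seq: "uncountable (UNIV :: (nat \<Rightarrow> bool) set)"
proof
  assume "countable (UNIV :: (nat \<Rightarrow> bool) set)"
  then obtain f :: "nat \<Rightarrow> (nat \<Rightarrow> bool)" where f: "range f = UNIV"
    using uncountable_def by blast
  obtain i where "f i = (\<lambda>n. \<not> f n n)" using f by (metis UNIV_I imageE)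
  hence "f i i = (\<not> f i i)" by metis
  thus False by simp
qed

theorem theoremA:
  fixes k :: nat
  assumes "k \<ge> 2"
  shows "(\<forall>x\<in>shift_space k. \<forall>e>0. \<exists>y\<in>Rec k - BR k. sdist x y < e)
       \<and> (\<exists>S. S \<subseteq> Rec k - BR k \<and> uncountable S \<and> DC1_scrambled S)"
proof (intro conjI ballI allI impI)
  fix x e assume x: "x \<in> shift_space k" and e: "(e::real) > 0"
  obtain m where m: "1 / 2 ^ m < e" using exists_small[OF e] by auto
  define w where "w = map x [0..<m]"
  have wk: "set w \<subseteq> {..<k}" using x by (auto simp: w_def shift_space_def)
  define y where "y = pt w (\<lambda>_. False)"
  have "y \<in> Rec k - BR k" using pt_Rec[OF wk assms] pt_notBR[OF wk assms] by (simp add: y_def)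
  moreover have "sdist x y \<le> 1 / 2 ^ m"
  proof (rule sdist_agree_le)
    fix l assume "l < m"
    thus "x l = y l" using pt_prefix[of l w] by (simp add: y_def w_def)
  qed
  ultimately show "\<exists>y\<in>Rec k - BR k. sdist x y < e" using m by force
next
  define S where "S = range (pt [])"
  have w0: "set ([]::nat list) \<subseteq> {..<k}" by simp
  have inj: "inj (pt [])" by (rule injI) (use pt_inj in blast)
  have "S \<subseteq> Rec k - BR k" using pt_Rec[OF w0 assms] pt_notBR[OF w0 assms] by (auto simp: S_def)
  moreover have "uncountable S"
  proof
    assume "countable S"
    hence "countable (UNIV :: (nat \<Rightarrow> bool) set)"
      using countable_image_inj_on[of "pt []" UNIV] inj by (simp add: S_def)
    thus False using uncountable_bool_seq by simp
  qed
  moreover have "DC1_scrambled S"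
    unfolding DC1_scrambled_def
  proof (intro conjI ballI impI)
    show "\<exists>x\<in>S. \<exists>y\<in>S. x \<noteq> y"
    proof -
      have "pt [] (\<lambda>_. False) \<noteq> pt [] (\<lambda>_. True)" by (rule pt_inj) (metis)
      thus ?thesis by (auto simp: S_def)
    qed
    fix a b assume "a \<in> S" "b \<in> S" "a \<noteq> b"
    then obtain z z' where "a = pt [] z" "b = pt [] z'" "z \<noteq> z'" by (auto simp: S_def)
    thus "DC1_pair a b" using pt_DC1 by simp
  qed
  ultimately show "\<exists>S. S \<subseteq> Rec k - BR k \<and> uncountable S \<and> DC1_scrambled S" by blast
qed


end
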